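(* Let $S$ be a regular ordered semigroup and $\mathcal{B}(S)$ its semigroup of bi-ideals. Let $\mathscr{L}_{\mathcal{B}(S)}$ be the Green's $\mathscr{L}$-relation of the semigroup $(\mathcal{B}(S),* )$ and let $\mathscr{L}'$ be the relation on $\mathcal{B}(S)$ given by: $A\,\mathscr{L}'\,B$ iff for each $a\in A$ there is $b\in B$ with $a\,\mathscr{L}_S\,b$ and for each $b\in B$ there is $a\in A$ with $a\,\mathscr{L}_S\,b$. Then $\mathscr{L}_{\mathcal{B}(S)}\subseteq\mathscr{L}'$.
   Context: An ordered semigroup $(S,\cdot,\leq)$ is a semigroup with a compatible partial order. For $A\subseteq S$, $(A]=\{x\in S: x\leq a\text{ for some }a\in A\}$. $S$ is regular if for each $a\in S$ there is $x\in S$ with $a\leq axa$. A nonempty $A\subseteq S$ is a bi-ideal if $ASA\subseteq A$ and $(A]=A$; $\mathcal{B}(S)$ is the set of bi-ideals with operation $A*B=(AB]$. $\mathscr{L}_S$ is the Green's relation on the ordered semigroup $S$: $a\,\mathscr{L}_S\,b$ iff $(a\cup Sa]=(b\cup Sb]$. $\mathscr{L}_{\mathcal{B}(S)}$ is the usual Green's $\mathscr{L}$-relation of the (unordered) semigroup $(\mathcal{B}(S),* )$. *)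

theory Defs
  imports Main
begin

definition ordered_semigroup :: "('a::{semigroup_mult,order}) itself \<Rightarrow> bool" where
  "ordered_semigroup _ \<longleftrightarrow> (\<forall>a b c::'a. a \<le> b \<longrightarrow> a * c \<le> b * c \<and> c * a \<le> c * b)"

definition down :: "('a::order) set \<Rightarrow> 'a set" where
  "down A = {x. \<exists>a\<in>A. x \<le> a}"

definition setmult :: "('a::times) set \<Rightarrow> 'a set \<Rightarrow> 'a set" where
  "setmult A B = {a * b | a b. a \<in> A \<and> b \<in> B}"

definition regular_os :: "('a::{semigroup_mult,order}) itself \<Rightarrow> bool" where
  "regular_os _ \<longleftrightarrow> (\<forall>a::'a. \<exists>x. a \<le> a * x * a)"

definition bi_ideal :: "('a::{semigroup_mult,order}) set \<Rightarrow> bool" where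
  "bi_ideal A \<longleftrightarrow> A \<noteq> {} \<and> setmult (setmult A UNIV) A \<subseteq> A \<and> down A = A"

definition bi_ideals :: "('a::{semigroup_mult,order}) set set" where
  "bi_ideals = {A. bi_ideal A}"

definition bmult :: "('a::{semigroup_mult,order}) set \<Rightarrow> 'a set \<Rightarrow> 'a set" where
  "bmult A B = down (setmult A B)"

definition greenL_S :: "('a::{semigroup_mult,order}) \<Rightarrow> 'a \<Rightarrow> bool" where
  "greenL_S a b \<longleftrightarrow> down ({a} \<union> setmult UNIV {a}) = down ({b} \<union> setmult UNIV {b})"

text \<open>Usual Green's L on the (unordered) semigroup (B(S), *): B(S)^1 A = B(S)^1 B.\<close>
definition greenL_B :: "('a::{semigroup_mult,order}) set \<Rightarrow> 'a set \<Rightarrow> bool" where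
  "greenL_B A B \<longleftrightarrow>
     insert A {bmult C A | C. C \<in> bi_ideals} = insert B {bmult C B | C. C \<in> bi_ideals}"

definition L_prime :: "('a::{semigroup_mult,order}) set \<Rightarrow> 'a set \<Rightarrow> bool" where
  "L_prime A B \<longleftrightarrow> (\<forall>a\<in>A. \<exists>b\<in>B. greenL_S a b) \<and> (\<forall>b\<in>B. \<exists>a\<in>A. greenL_S a b)"

end

theory Submission
  imports Defs
begin

lemma half:
  fixes A B C D :: "('a::{semigroup_mult,order}) set"
  assumes os: "ordered_semigroup TYPE('a)"
    and reg: "regular_os TYPE('a)"
    and bA: "bi_ideal A"
    and eA: "A = bmult C B" and eB: "B = bmult D A"
    and a: "a \<in> A"
  shows "\<exists>b\<in>B. greenL_S a b"
proof -
  have mono: "\<And>p q r::'a. p \<le> q \<Longrightarrow> p * r \<le> q * r \<and> r * p \<le> r * q"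
    using os unfolding ordered_semigroup_def by blast
  obtain x where x: "a \<le> a * x * a" using reg unfolding regular_os_def by blast
  from a eA obtain c b1 where c: "c \<in> C" and b1: "b1 \<in> B" and ab: "a \<le> c * b1"
    unfolding bmult_def down_def setmult_def by blast
  from b1 eB obtain d a1 where d: "d \<in> D" and a1: "a1 \<in> A" and bd: "b1 \<le> d * a1"
    unfolding bmult_def down_def setmult_def by blast
  have "c * b1 \<le> c * (d * a1)" using mono[OF bd, of c] by blast
  hence 1: "a \<le> c * (d * a1)" using ab by (rule order_trans[rotated])
  have "a * (x * a) \<le> c * (d * a1) * (x * a)" using mono[OF 1, of "x * a"] by blast
  hence "a * x * a \<le> c * (d * (a1 * x * a))" by (simp add: mult.assoc)
  hence le: "a \<le> c * (d * (a1 * x * a))" using x by (rule order_trans[rotated])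
  have "a1 * x * a \<in> A" using bA a1 a unfolding bi_ideal_def setmult_def by blast
  hence "d * (a1 * x * a) \<in> B" using d eB unfolding bmult_def down_def setmult_def by blast
  define b where "b = d * (a1 * x * a)"
  have bs: "b = (d * a1 * x) * a" unfolding b_def by (simp add: mult.assoc)
  have "greenL_S a b"
    unfolding greenL_S_def
  proof (rule set_eqI, rule iffI)
    fix z assume "z \<in> down ({a} \<union> setmult UNIV {a})"
    then obtain w where w: "z \<le> w" "w = a \<or> (\<exists>s. w = s * a)"
      unfolding down_def setmult_def by blast
    show "z \<in> down ({b} \<union> setmult UNIV {b})"
    proof (cases "w = a")
      case True
      then have "z \<le> c * b" using w le b_def by auto
      then show ?thesis unfolding down_def setmult_def by blast
    next
      case False
      then obtain s where "w = s * a" using w by blast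
      moreover have "s * a \<le> (s * c) * b" using mono[OF le, of s] b_def by (simp add: mult.assoc)
      ultimately have "z \<le> (s * c) * b" using w by (metis order_trans)
      then show ?thesis unfolding down_def setmult_def by blast
    qed
  next
    fix z assume "z \<in> down ({b} \<union> setmult UNIV {b})"
    then obtain w where w: "z \<le> w" "w = b \<or> (\<exists>s. w = s * b)"
      unfolding down_def setmult_def by blast
    show "z \<in> down ({a} \<union> setmult UNIV {a})"
    proof (cases "w = b")
      case True
      then have "z \<le> (d * a1 * x) * a" using w bs by auto
      then show ?thesis unfolding down_def setmult_def by blast
    next
      case False
      then obtain s where "w = s * b" using w by blast
      then have "z \<le> (s * (d * a1 * x)) * a" using w bs by (simp add: mult.assoc)
      then show ?thesis unfolding down_def setmult_def by blast
    qed
  qed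
  have "b \<in> B" unfolding b_def by fact
  with \<open>greenL_S a b\<close> show ?thesis by (rule_tac bexI)
qed

lemma greenL_S_sym: "greenL_S a b \<Longrightarrow> greenL_S b a"
  unfolding greenL_S_def by simp

theorem mainTheorem3:
  fixes A B :: "('a::{semigroup_mult,order}) set"
  assumes "ordered_semigroup TYPE('a)"
    and "regular_os TYPE('a)"
    and "A \<in> bi_ideals" and "B \<in> bi_ideals"
    and "greenL_B A B"
  shows "L_prime A B"
proof (cases "A = B")
  case True
  have "greenL_S a a" for a :: 'a unfolding greenL_S_def by (rule refl)
  then show ?thesis unfolding L_prime_def True by blast
next
  case False
  have eq: "insert A {bmult C A | C. C \<in> bi_ideals} = insert B {bmult C B | C. C \<in> bi_ideals}"
    using assms(5) unfolding greenL_B_def .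
  have "A \<in> insert A {bmult C A | C. C \<in> bi_ideals}" by (rule insertI1)
  hence "A \<in> insert B {bmult C B | C. C \<in> bi_ideals}" by (simp only: eq)
  with False have "A \<in> {bmult C B | C. C \<in> bi_ideals}" by (simp only: insert_iff simp_thms)
  then obtain C where eA: "A = bmult C B" by (simp only: mem_Collect_eq) blast
  have "B \<in> insert B {bmult C B | C. C \<in> bi_ideals}" by (rule insertI1)
  hence "B \<in> insert A {bmult C A | C. C \<in> bi_ideals}" by (simp only: eq)
  with False have "B \<in> {bmult C A | C. C \<in> bi_ideals}" by auto
  then obtain D where eB: "B = bmult D A" by (simp only: mem_Collect_eq) blast
  have bA: "bi_ideal A" and bB: "bi_ideal B" using assms(3,4) unfolding bi_ideals_def by auto
  show ?thesis unfolding L_prime_def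
  proof (intro conjI ballI)
    fix a assume "a \<in> A"
    then show "\<exists>b\<in>B. greenL_S a b" by (rule half[OF assms(1,2) bA eA eB])
  next
    fix b assume "b \<in> B"
    then obtain a where "a \<in> A" "greenL_S b a" using half[OF assms(1,2) bB eB eA] by blast
    then show "\<exists>a\<in>A. greenL_S a b" using greenL_S_sym by blast
  qed
qed

end
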